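(* For every graph $G$ and every field $\mathbb{F}$, $\chi(G)\le 2$ if and only if $\overline{\xi}_l(G,\mathbb{F})\le 2$.
   Context: An orthogonal representation of $G=(V,E)$ over $\mathbb{F}$ assigns $u_v\in\mathbb{F}^t$ to each $v$ with $\langle u_v,u_v\rangle\ne0$ and $\langle u_v,u_{v'}\rangle=0$ for adjacent $v,v'$, where $\langle x,y\rangle=\sum_i x_iy_i$ (over $\mathbb{C}$ one may use $\sum_i x_i\overline{y_i}$). Its locality is $\max_v\dim\mathrm{span}\{u_{v'}:v'\in\{v\}\cup N(v)\}$. $\overline{\xi}_l(G,\mathbb{F})$ is the minimum locality of an orthogonal representation of $G$ over $\mathbb{F}$; $\chi(G)$ is the chromatic number. *)

theory Defs
  imports Complex_Main "HOL-Library.Function_Algebras"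
begin

definition graph :: "'v set \<Rightarrow> ('v \<Rightarrow> 'v \<Rightarrow> bool) \<Rightarrow> bool" where
  "graph V E \<longleftrightarrow> finite V \<and> (\<forall>x y. E x y \<longrightarrow> E y x) \<and> (\<forall>x. \<not> E x x)"

definition neighbours :: "'v set \<Rightarrow> ('v \<Rightarrow> 'v \<Rightarrow> bool) \<Rightarrow> 'v \<Rightarrow> 'v set" where
  "neighbours V E v = {w \<in> V. E v w}"

definition colourable :: "'v set \<Rightarrow> ('v \<Rightarrow> 'v \<Rightarrow> bool) \<Rightarrow> nat \<Rightarrow> bool" where
  "colourable V E k \<longleftrightarrow> (\<exists>c :: 'v \<Rightarrow> nat. (\<forall>v\<in>V. c v < k) \<and>
      (\<forall>v\<in>V. \<forall>w\<in>V. E v w \<longrightarrow> c v \<noteq> c w))"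

definition chromatic_number :: "'v set \<Rightarrow> ('v \<Rightarrow> 'v \<Rightarrow> bool) \<Rightarrow> nat" where
  "chromatic_number V E = (LEAST k. colourable V E k)"

text \<open>Vectors of \<open>F^t\<close> are functions \<open>nat \<Rightarrow> F\<close> vanishing at indices \<open>\<ge> t\<close>;
  bilinear form \<open>\<langle>x,y\<rangle> = \<Sum>i<t. x i * y i\<close>.\<close>
definition bil :: "nat \<Rightarrow> (nat \<Rightarrow> 'a::field) \<Rightarrow> (nat \<Rightarrow> 'a) \<Rightarrow> 'a" where
  "bil t x y = (\<Sum>i<t. x i * y i)"

definition fscale :: "'a::field \<Rightarrow> (nat \<Rightarrow> 'a) \<Rightarrow> (nat \<Rightarrow> 'a)" where
  "fscale c x = (\<lambda>i. c * x i)"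

definition orth_rep :: "'v set \<Rightarrow> ('v \<Rightarrow> 'v \<Rightarrow> bool) \<Rightarrow> nat \<Rightarrow> ('v \<Rightarrow> nat \<Rightarrow> 'a::field) \<Rightarrow> bool" where
  "orth_rep V E t u \<longleftrightarrow>
     (\<forall>v\<in>V. \<forall>i\<ge>t. u v i = 0) \<and>
     (\<forall>v\<in>V. bil t (u v) (u v) \<noteq> 0) \<and>
     (\<forall>v\<in>V. \<forall>w\<in>V. E v w \<longrightarrow> bil t (u v) (u w) = 0)"

definition locality :: "'v set \<Rightarrow> ('v \<Rightarrow> 'v \<Rightarrow> bool) \<Rightarrow> ('v \<Rightarrow> nat \<Rightarrow> 'a::field) \<Rightarrow> nat" where
  "locality V E u = Max (insert 0 ((\<lambda>v. vector_space.dim fscale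
       (u ` (insert v (neighbours V E v)))) ` V))"

definition min_locality :: "'v set \<Rightarrow> ('v \<Rightarrow> 'v \<Rightarrow> bool) \<Rightarrow> 'a::field itself \<Rightarrow> nat" where
  "min_locality V E F = (LEAST l. \<exists>t (u :: 'v \<Rightarrow> nat \<Rightarrow> 'a). orth_rep V E t u \<and> locality V E u = l)"

end

theory Submission
  imports Defs
begin

lemma vs_fscale: "vector_space (fscale :: 'a::field \<Rightarrow> (nat \<Rightarrow> 'a) \<Rightarrow> _)"
  by unfold_locales (auto simp: fscale_def fun_eq_iff algebra_simps)

interpretation FV: vector_space "fscale :: 'a::field \<Rightarrow> (nat \<Rightarrow> 'a) \<Rightarrow> _"
  by (rule vs_fscale)

lemma bil_add: "bil t (x + y) w = bil t x w + bil t y w"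
  by (simp add: bil_def algebra_simps sum.distrib)
lemma bil_scale: "bil t (fscale c x) w = c * bil t x w"
  by (simp add: bil_def fscale_def sum_distrib_left algebra_simps)
lemma bil_zero: "bil t 0 w = 0"
  by (simp add: bil_def)
lemma bil_sym: "bil t x w = bil t w x"
  by (simp add: bil_def mult.commute)
lemma bil_nz: "bil t x x \<noteq> 0 \<Longrightarrow> x \<noteq> 0"
  using bil_zero by auto

lemma three_indep:
  fixes x y z :: "nat \<Rightarrow> 'a::field"
  assumes xx: "bil t x x \<noteq> 0" and yy: "bil t y y \<noteq> 0" and zz: "bil t z z \<noteq> 0"
    and xy: "bil t x y = 0" and xz: "bil t x z = 0"
    and np: "\<not> (\<exists>c. z = fscale c y)"
  shows "FV.independent {x,y,z} \<and> card {x,y,z} = 3"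
proof -
  have d1: "x \<noteq> y" using xx xy by auto
  have d2: "x \<noteq> z" using xx xz by auto
  have d3: "y \<noteq> z"
  proof
    assume "y = z" hence "z = fscale 1 y" by (simp add: fscale_def)
    thus False using np by blast
  qed
  have ynz: "y \<noteq> 0" using bil_nz yy .
  have "\<not> FV.dependent {x,y,z}"
  proof
    assume "FV.dependent {x,y,z}"
    then obtain g where g: "\<exists>v\<in>{x,y,z}. g v \<noteq> 0" and s: "(\<Sum>v\<in>{x,y,z}. fscale (g v) v) = 0"
      using FV.dependent_finite[of "{x,y,z}"] by blast
    have s2: "fscale (g x) x + fscale (g y) y + fscale (g z) z = 0"
      using s d1 d2 d3 by (simp add: add.assoc)
    have "bil t (fscale (g x) x + fscale (g y) y + fscale (g z) z) x = 0"
      using s2 bil_zero by metis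
    moreover have "bil t y x = 0" "bil t z x = 0" using xy xz bil_sym by metis+
    ultimately have "g x * bil t x x = 0"
      by (simp only: bil_add bil_scale) simp
    hence gx: "g x = 0" using xx by simp
    have fx0: "fscale 0 x = 0" by (simp add: fscale_def fun_eq_iff)
    have s3: "fscale (g y) y + fscale (g z) z = 0" using s2 gx fx0 by simp
    have gz: "g z = 0"
    proof (rule ccontr)
      assume "g z \<noteq> 0"
      have "z = fscale (- g y / g z) y"
      proof
        fix i
        have "g y * y i + g z * z i = 0" using fun_cong[OF s3, of i] by (simp add: fscale_def)
        thus "z i = fscale (- g y / g z) y i" using \<open>g z \<noteq> 0\<close>
          by (simp add: fscale_def field_simps) (metis add.commute add_eq_0_iff mult.commute)
      qed
      thus False using np by blast
    qed
    hence "fscale (g y) y = 0" using s3 by (simp add: fscale_def fun_eq_iff)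
    hence gy: "g y = 0" using ynz by (auto simp: fscale_def fun_eq_iff)
    show False using g gx gy gz by auto
  qed
  thus ?thesis using d1 d2 d3 by simp
qed

lemma dim_ge3:
  fixes S :: "(nat \<Rightarrow> 'a::field) set"
  assumes "finite S" "B \<subseteq> S" "FV.independent B" "card B = 3"
  shows "3 \<le> FV.dim S"
proof -
  obtain C where C: "C \<subseteq> S" "FV.independent C" "S \<subseteq> FV.span C" "card C = FV.dim S"
    by (rule FV.basis_exists)
  have "finite C" using C(1) assms(1) finite_subset by blast
  from FV.independent_span_bound[OF this assms(3)] assms C show ?thesis by auto
qed

definition ind :: "nat \<Rightarrow> nat \<Rightarrow> 'a::field" where
  "ind k = (\<lambda>i. if i = k then 1 else 0)"

lemma ind_rep:
  assumes "\<forall>v\<in>V. f v < t" "\<forall>v\<in>V. \<forall>w\<in>V. E v w \<longrightarrow> f v \<noteq> f w"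
  shows "orth_rep V E t (\<lambda>v. (ind (f v) :: nat \<Rightarrow> 'a::field))"
proof -
  have a: "bil t (ind k :: nat \<Rightarrow> 'a) (ind k) = 1" if "k < t" for k
  proof -
    have "(\<lambda>i. (ind k :: nat \<Rightarrow> 'a) i * ind k i) = (\<lambda>i. if i = k then 1 else 0)"
      by (auto simp: ind_def)
    thus ?thesis using that unfolding bil_def by (simp only:) simp
  qed
  have b: "bil t (ind k :: nat \<Rightarrow> 'a) (ind l) = 0" if "k \<noteq> l" for k l
    using that unfolding bil_def ind_def by (intro sum.neutral) auto
  show ?thesis using assms a b unfolding orth_rep_def by (auto simp: ind_def)
qed

lemma colourable_mono: "colourable V E k \<Longrightarrow> k \<le> l \<Longrightarrow> colourable V E l"
  unfolding colourable_def using less_le_trans by blast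

lemma colourable_exists:
  assumes "graph V E" shows "\<exists>k. colourable V E k"
proof -
  obtain f where f: "bij_betw f V {0..<card V}"
    using assms ex_bij_betw_finite_nat unfolding graph_def by blast
  have "colourable V E (card V)"
    unfolding colourable_def
  proof (intro exI[of _ f] conjI ballI impI)
    fix v assume "v \<in> V" thus "f v < card V" using f by (auto simp: bij_betw_def)
  next
    fix v w assume "v \<in> V" "w \<in> V" "E v w"
    hence "v \<noteq> w" using assms by (auto simp: graph_def)
    thus "f v \<noteq> f w" using f \<open>v \<in> V\<close> \<open>w \<in> V\<close> by (auto simp: bij_betw_def inj_on_def)
  qed
  thus ?thesis by blast
qed

lemma chrom_le2: assumes "graph V E" shows "chromatic_number V E \<le> 2 \<longleftrightarrow> colourable V E 2"
proof
  assume "chromatic_number V E \<le> 2"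
  moreover have "colourable V E (chromatic_number V E)"
    unfolding chromatic_number_def using colourable_exists[OF assms] by (rule LeastI_ex)
  ultimately show "colourable V E 2" using colourable_mono by blast
next
  assume "colourable V E 2" thus "chromatic_number V E \<le> 2"
    unfolding chromatic_number_def by (rule Least_le)
qed

lemma rep_exists:
  assumes "graph V E" shows "\<exists>t (u :: 'v \<Rightarrow> nat \<Rightarrow> 'a::field). orth_rep V E t u"
proof -
  obtain f where f: "bij_betw f V {0..<card V}"
    using assms ex_bij_betw_finite_nat unfolding graph_def by blast
  have "orth_rep V E (card V) (\<lambda>v. (ind (f v) :: nat \<Rightarrow> 'a))"
  proof (rule ind_rep; intro ballI impI)
    fix v assume "v \<in> V" thus "f v < card V" using f by (auto simp: bij_betw_def)
  next
    fix v w assume "v \<in> V" "w \<in> V" "E v w"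
    hence "v \<noteq> w" using assms by (auto simp: graph_def)
    thus "f v \<noteq> f w" using f \<open>v \<in> V\<close> \<open>w \<in> V\<close> by (auto simp: bij_betw_def inj_on_def)
  qed
  thus ?thesis by blast
qed


lemma fscale_1: "fscale 1 x = x" by (simp add: fscale_def)
lemma fscale_comp: "fscale a (fscale b x) = fscale (a*b) x" by (simp add: fscale_def fun_eq_iff)

lemma loc_le:
  assumes "finite V" "v \<in> V" "locality V E u \<le> l"
  shows "FV.dim (u ` insert v (neighbours V E v)) \<le> l"
proof -
  have "FV.dim (u ` insert v (neighbours V E v)) \<le> locality V E u"
    unfolding locality_def using assms by (intro Max_ge) auto
  thus ?thesis using assms by simp
qed

lemma backward:
  fixes u :: "'v \<Rightarrow> nat \<Rightarrow> 'a::field"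
  assumes g: "graph V E" and rep: "orth_rep V E t u" and loc: "locality V E u \<le> 2"
  shows "colourable V E 2"
proof -
  have fin: "finite V" using g by (simp add: graph_def)
  have nz: "bil t (u v) (u v) \<noteq> 0" if "v \<in> V" for v using rep that by (simp add: orth_rep_def)
  have orth: "bil t (u v) (u w) = 0" if "v \<in> V" "w \<in> V" "E v w" for v w
    using rep that by (simp add: orth_rep_def)
  have unz: "u v \<noteq> 0" if "v \<in> V" for v using bil_nz nz that by blast
  have par: "\<exists>c. u b = fscale c (u a)" if "v \<in> V" "a \<in> V" "b \<in> V" "E v a" "E v b" for v a b
  proof (rule ccontr)
    assume np: "\<not> (\<exists>c. u b = fscale c (u a))"
    have "FV.independent {u v, u a, u b} \<and> card {u v, u a, u b} = 3"
      by (rule three_indep[OF nz nz nz orth orth np]) (use that in auto)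
    moreover have "{u v, u a, u b} \<subseteq> u ` insert v (neighbours V E v)"
      using that by (auto simp: neighbours_def)
    moreover have "finite (u ` insert v (neighbours V E v))"
      using fin by (simp add: neighbours_def)
    ultimately have "3 \<le> FV.dim (u ` insert v (neighbours V E v))"
      using dim_ge3 by blast
    moreover have "FV.dim (u ` insert v (neighbours V E v)) \<le> 2"
      using loc_le[OF fin \<open>v \<in> V\<close> loc] .
    ultimately show False by simp
  qed
  define cls where "cls w = {x\<in>V. \<exists>c. u x = fscale c (u w)}" for w
  have cls_eq: "cls w' = cls w" if "w \<in> V" "w' \<in> V" "u w' = fscale c (u w)" for w w' c
  proof -
    have "c \<noteq> 0" using unz[OF that(2)] that(3) by (auto simp: fscale_def fun_eq_iff)
    have "u w = fscale (1/c) (u w')" using that(3) \<open>c \<noteq> 0\<close> by (simp add: fscale_comp fscale_1)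
    show ?thesis unfolding cls_def
    proof (intro Collect_cong conj_cong refl iffI; elim exE)
      fix x d assume "u x = fscale d (u w')"
      thus "\<exists>c. u x = fscale c (u w)" using that(3) by (auto simp: fscale_comp)
    next
      fix x d assume "u x = fscale d (u w)"
      thus "\<exists>c. u x = fscale c (u w')" using \<open>u w = fscale (1/c) (u w')\<close> by (auto simp: fscale_comp)
    qed
  qed
  have disj: "cls v \<inter> cls w = {}" if "v \<in> V" "w \<in> V" "E v w" for v w
  proof (rule ccontr)
    assume "cls v \<inter> cls w \<noteq> {}"
    then obtain x a b where x: "x \<in> V" "u x = fscale a (u v)" "u x = fscale b (u w)"
      unfolding cls_def by blast
    have "b \<noteq> 0" using unz[OF x(1)] x(3) by (auto simp: fscale_def fun_eq_iff)
    have "u w = fscale (a/b) (u v)"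
    proof
      fix i
      have "a * u v i = b * u w i" using fun_cong[OF x(2), of i] fun_cong[OF x(3), of i]
        by (simp add: fscale_def)
      thus "u w i = fscale (a/b) (u v) i" using \<open>b \<noteq> 0\<close> by (simp add: fscale_def field_simps)
    qed
    hence "bil t (u w) (u v) = (a/b) * bil t (u v) (u v)" by (simp add: bil_scale)
    moreover have "bil t (u w) (u v) = 0" using orth[OF that] bil_sym by metis
    moreover have "a \<noteq> 0" using unz[OF x(1)] x(2) by (auto simp: fscale_def fun_eq_iff)
    ultimately show False using nz[OF that(1)] \<open>b \<noteq> 0\<close> by simp
  qed
  obtain f where f: "bij_betw f V {0..<card V}" using fin ex_bij_betw_finite_nat by blast
  hence finj: "inj_on f V" by (simp add: bij_betw_def)
  define key where "key w = Min (f ` cls w)" for w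
  have keyin: "\<exists>x\<in>cls w. key w = f x" if "w \<in> V" for w
  proof -
    have "w \<in> cls w" using that unfolding cls_def by (metis (mono_tags) fscale_1 mem_Collect_eq)
    moreover have "finite (cls w)" using fin unfolding cls_def by simp
    ultimately have "key w \<in> f ` cls w" unfolding key_def by (intro Min_in) auto
    thus ?thesis by auto
  qed
  have keyne: "key v \<noteq> key w" if vw: "v \<in> V" "w \<in> V" "E v w" for v w
  proof
    assume "key v = key w"
    obtain x where x: "x \<in> cls v" "key v = f x" using keyin[OF vw(1)] by blast
    obtain y where y: "y \<in> cls w" "key w = f y" using keyin[OF vw(2)] by blast
    have "x \<in> V" "y \<in> V" using x y unfolding cls_def by auto
    hence "x = y" using finj x y \<open>key v = key w\<close> by (auto simp: inj_on_def)
    thus False using disj[OF vw] x y by auto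
  qed
  have keynb: "key a = key w" if h: "v \<in> V" "a \<in> V" "w \<in> V" "E v a" "E v w" for v a w
  proof -
    obtain c where "u w = fscale c (u a)" using par[OF h(1,2,3,4,5)] by blast
    thus ?thesis using cls_eq[OF h(2,3)] unfolding key_def by metis
  qed
  define col where "col v = (if key v < key (SOME a. a \<in> V \<and> E v a) then 0 else 1::nat)" for v
  show ?thesis unfolding colourable_def
  proof (intro exI[of _ col] conjI ballI impI)
    fix v assume "v \<in> V" show "col v < 2" by (simp add: col_def)
  next
    fix v w assume vw: "v \<in> V" "w \<in> V" "E v w"
    have wv: "E w v" using g vw(3) by (simp add: graph_def)
    define a where "a = (SOME a. a \<in> V \<and> E v a)"
    define b where "b = (SOME a. a \<in> V \<and> E w a)"
    have a: "a \<in> V \<and> E v a" unfolding a_def by (rule someI[of _ w]) (use vw in simp)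
    have b: "b \<in> V \<and> E w b" unfolding b_def by (rule someI[of _ v]) (use vw wv in simp)
    have "key a = key w" using keynb[of v a w] a vw by blast
    moreover have "key b = key v" using keynb[of w b v] b vw wv by blast
    moreover have "key v \<noteq> key w" using keyne[OF vw] .
    ultimately show "col v \<noteq> col w" unfolding col_def a_def[symmetric] b_def[symmetric] by auto
  qed
qed

lemma forward:
  fixes V :: "'v set"
  assumes g: "graph V E" and c: "colourable V E 2"
  shows "min_locality V E TYPE('a::field) \<le> 2"
proof -
  have fin: "finite V" using g by (simp add: graph_def)
  obtain c :: "'v \<Rightarrow> nat" where c: "\<forall>v\<in>V. c v < 2" "\<forall>v\<in>V. \<forall>w\<in>V. E v w \<longrightarrow> c v \<noteq> c w"
    using assms unfolding colourable_def by blast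
  define u where "u = (\<lambda>v. (ind (c v) :: nat \<Rightarrow> 'a))"
  have rep: "orth_rep V E 2 u" unfolding u_def by (rule ind_rep[OF c])
  have "FV.dim (u ` insert v (neighbours V E v)) \<le> 2" if vV: "v \<in> V" for v
  proof -
    have "u ` insert v (neighbours V E v) \<subseteq> FV.span {ind 0, ind 1}"
    proof
      fix x assume "x \<in> u ` insert v (neighbours V E v)"
      then obtain w where "w \<in> V" "x = ind (c w)" using vV by (auto simp: u_def neighbours_def)
      hence "x \<in> {ind 0, ind 1}" using c(1) by (cases "c w") auto
      thus "x \<in> FV.span {ind 0, ind 1}" by (rule FV.span_base)
    qed
    hence "FV.dim (u ` insert v (neighbours V E v)) \<le> card {ind 0 :: nat \<Rightarrow> 'a, ind 1}"
      by (intro FV.dim_le_card) auto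
    also have "\<dots> \<le> 2" by (rule order_trans[OF card_insert_le_m1]) auto
    finally show ?thesis .
  qed
  hence "locality V E u \<le> 2" unfolding locality_def using fin by (subst Max_le_iff) auto
  moreover have "min_locality V E TYPE('a) \<le> locality V E u"
    unfolding min_locality_def by (rule Least_le) (use rep in blast)
  ultimately show ?thesis by simp
qed

theorem mainTheorem6:
  fixes V :: "'v set" and E :: "'v \<Rightarrow> 'v \<Rightarrow> bool"
  assumes "graph V E"
  shows "chromatic_number V E \<le> 2 \<longleftrightarrow> min_locality V E TYPE('a::field) \<le> 2"
proof
  assume "chromatic_number V E \<le> 2"
  thus "min_locality V E TYPE('a::field) \<le> 2" using chrom_le2[OF assms] forward[OF assms] by blast
next
  assume m: "min_locality V E TYPE('a::field) \<le> 2"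
  have "\<exists>t (u :: 'v \<Rightarrow> nat \<Rightarrow> 'a). orth_rep V E t u \<and> locality V E u = min_locality V E TYPE('a)"
    unfolding min_locality_def
    by (rule LeastI_ex) (use rep_exists[OF assms, where 'a='a] in blast)
  then obtain t and u :: "'v \<Rightarrow> nat \<Rightarrow> 'a" where "orth_rep V E t u" "locality V E u \<le> 2"
    using m by auto
  thus "chromatic_number V E \<le> 2" using backward[OF assms] chrom_le2[OF assms] by blast
qed

end
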